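(* Let $\Sigma$ be a set of prime numbers, $S$ the multiplicative submonoid of $\mathbb{N}$ generated by $\Sigma$, $\mathbb{Z}[S^{-1}]\subset\mathbb{Q}$ the localization. Let $M$ be a locally compact topological $\mathbb{Z}[S^{-1}]$-module that contains a compact open subgroup and is compactly generated. Then $M\cong(\mathbb{Z}[S^{-1}])^k\times C(M)$ as topological $\mathbb{Z}[S^{-1}]$-modules for some $k\ge 0$, where $(\mathbb{Z}[S^{-1}])^k$ is discrete.
   Context: All topological groups are Hausdorff; $\mathbb{Z}[S^{-1}]$ is discrete; scalar multiplication is continuous. Compactly generated means generated as a $\mathbb{Z}[S^{-1}]$-module by a compact subset. $C(M)$ is the set of elements $x\in M$ such that the closure of the subgroup generated by $x$ is compact (a closed submodule). *)

theory Defs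
  imports "HOL-Analysis.Analysis" "HOL-Computational_Algebra.Primes"
begin

inductive_set gen_monoid :: "nat set \<Rightarrow> nat set" for \<Sigma> :: "nat set" where
  one: "1 \<in> gen_monoid \<Sigma>"
| mult: "s \<in> gen_monoid \<Sigma> \<Longrightarrow> p \<in> \<Sigma> \<Longrightarrow> s * p \<in> gen_monoid \<Sigma>"

definition ZS :: "nat set \<Rightarrow> rat set" where
  "ZS \<Sigma> = {of_int a / of_nat s | a s. s \<in> gen_monoid \<Sigma>}"

(* a Hausdorff topological Z[S^-1]-module structure on the type 'm, with scalar action smul
   (only scalars in ZS matter) *)
definition top_ZS_module :: "nat set \<Rightarrow> (rat \<Rightarrow> 'm::{ab_group_add,t2_space} \<Rightarrow> 'm) \<Rightarrow> bool" where
  "top_ZS_module \<Sigma> smul \<longleftrightarrow>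
     (\<forall>q\<in>ZS \<Sigma>. \<forall>x y. smul q (x + y) = smul q x + smul q y) \<and>
     (\<forall>q\<in>ZS \<Sigma>. \<forall>r\<in>ZS \<Sigma>. \<forall>x. smul (q + r) x = smul q x + smul r x) \<and>
     (\<forall>q\<in>ZS \<Sigma>. \<forall>r\<in>ZS \<Sigma>. \<forall>x. smul (q * r) x = smul q (smul r x)) \<and>
     (\<forall>x. smul 1 x = x) \<and>
     continuous_on UNIV (\<lambda>p::'m \<times> 'm. fst p + snd p) \<and>
     continuous_on UNIV (\<lambda>x::'m. - x) \<and>
     (\<forall>q\<in>ZS \<Sigma>. continuous_on UNIV (smul q))"

definition is_subgroup :: "'m::ab_group_add set \<Rightarrow> bool" where
  "is_subgroup U \<longleftrightarrow> 0 \<in> U \<and> (\<forall>x\<in>U. \<forall>y\<in>U. x + y \<in> U) \<and> (\<forall>x\<in>U. - x \<in> U)"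

definition is_submodule :: "nat set \<Rightarrow> (rat \<Rightarrow> 'm::ab_group_add \<Rightarrow> 'm) \<Rightarrow> 'm set \<Rightarrow> bool" where
  "is_submodule \<Sigma> smul N \<longleftrightarrow> is_subgroup N \<and> (\<forall>q\<in>ZS \<Sigma>. \<forall>x\<in>N. smul q x \<in> N)"

definition gen_submodule :: "nat set \<Rightarrow> (rat \<Rightarrow> 'm::ab_group_add \<Rightarrow> 'm) \<Rightarrow> 'm set \<Rightarrow> 'm set" where
  "gen_submodule \<Sigma> smul K = \<Inter>{N. is_submodule \<Sigma> smul N \<and> K \<subseteq> N}"

definition compactly_generated :: "nat set \<Rightarrow> (rat \<Rightarrow> 'm::{ab_group_add,topological_space} \<Rightarrow> 'm) \<Rightarrow> bool" where
  "compactly_generated \<Sigma> smul \<longleftrightarrow> (\<exists>K. compact K \<and> gen_submodule \<Sigma> smul K = UNIV)"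

definition Cpart :: "(rat \<Rightarrow> 'm::{ab_group_add,topological_space} \<Rightarrow> 'm) \<Rightarrow> 'm set" where
  "Cpart smul = {x. compact (closure (range (\<lambda>n::int. smul (of_int n) x)))}"

definition ZS_pow :: "nat set \<Rightarrow> nat \<Rightarrow> (nat \<Rightarrow> rat) set" where
  "ZS_pow \<Sigma> k = {v. (\<forall>i<k. v i \<in> ZS \<Sigma>) \<and> (\<forall>i\<ge>k. v i = 0)}"

end

theory Submission
  imports Defs
begin
lemma gen_monoid_pos: "s \<in> gen_monoid \<Sigma> \<Longrightarrow> \<forall>p\<in>\<Sigma>. prime p \<Longrightarrow> s > 0"
  by (induction s rule: gen_monoid.induct) (auto simp: prime_gt_0_nat)

lemma gen_monoid_mult: "t \<in> gen_monoid \<Sigma> \<Longrightarrow> s \<in> gen_monoid \<Sigma> \<Longrightarrow> s * t \<in> gen_monoid \<Sigma>"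
  by (induction rule: gen_monoid.induct) (auto simp: mult.assoc[symmetric] intro: gen_monoid.mult)

lemma ZS_int[simp]: "of_int a \<in> ZS \<Sigma>"
  unfolding ZS_def by (rule CollectI, rule exI[of _ a], rule exI[of _ 1]) (use gen_monoid.one[of \<Sigma>] in auto)

lemma ZS_0[simp]: "0 \<in> ZS \<Sigma>" using ZS_int[of 0] by simp
lemma ZS_1[simp]: "1 \<in> ZS \<Sigma>" using ZS_int[of 1] by simp
lemma ZS_nat[simp]: "of_nat n \<in> ZS \<Sigma>" using ZS_int[of "int n"] by simp

lemma ZSE:
  assumes "\<forall>p\<in>\<Sigma>. prime p" "q \<in> ZS \<Sigma>"
  obtains a s where "s \<in> gen_monoid \<Sigma>" "s > 0" "q = of_int a / of_nat s"
  using assms gen_monoid_pos unfolding ZS_def by blast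

lemma ZS_add: assumes "\<forall>p\<in>\<Sigma>. prime p" "q \<in> ZS \<Sigma>" "r \<in> ZS \<Sigma>" shows "q + r \<in> ZS \<Sigma>"
proof -
  obtain a s where a: "s \<in> gen_monoid \<Sigma>" "s > 0" "q = of_int a / of_nat s" using ZSE assms by metis
  obtain b t where b: "t \<in> gen_monoid \<Sigma>" "t > 0" "r = of_int b / of_nat t" using ZSE assms by metis
  have "q + r = of_int (a * int t + b * int s) / of_nat (s * t)"
    using a b by (simp add: field_simps)
  moreover have "s * t \<in> gen_monoid \<Sigma>" using a b gen_monoid_mult by blast
  ultimately show ?thesis unfolding ZS_def by blast
qed

lemma ZS_mult: assumes "\<forall>p\<in>\<Sigma>. prime p" "q \<in> ZS \<Sigma>" "r \<in> ZS \<Sigma>" shows "q * r \<in> ZS \<Sigma>"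
proof -
  obtain a s where a: "s \<in> gen_monoid \<Sigma>" "s > 0" "q = of_int a / of_nat s" using ZSE assms by metis
  obtain b t where b: "t \<in> gen_monoid \<Sigma>" "t > 0" "r = of_int b / of_nat t" using ZSE assms by metis
  have "q * r = of_int (a * b) / of_nat (s * t)"
    using a b by (simp add: field_simps)
  moreover have "s * t \<in> gen_monoid \<Sigma>" using a b gen_monoid_mult by blast
  ultimately show ?thesis unfolding ZS_def by blast
qed

lemma ZS_uminus: assumes "q \<in> ZS \<Sigma>" shows "- q \<in> ZS \<Sigma>"
proof -
  obtain a s where a: "s \<in> gen_monoid \<Sigma>" "q = of_int a / of_nat s" using assms unfolding ZS_def by blast
  then have "- q = of_int (- a) / of_nat s" by simp
  then show ?thesis using a unfolding ZS_def by blast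
qed

lemma ZS_diff: assumes "\<forall>p\<in>\<Sigma>. prime p" "q \<in> ZS \<Sigma>" "r \<in> ZS \<Sigma>" shows "q - r \<in> ZS \<Sigma>"
  using ZS_add[OF assms(1,2) ZS_uminus[OF assms(3)]] by simp

lemma ZS_sum: assumes "\<forall>p\<in>\<Sigma>. prime p" "\<And>i. i \<in> I \<Longrightarrow> f i \<in> ZS \<Sigma>" shows "sum f I \<in> ZS \<Sigma>"
  using assms(2) by (induction I rule: infinite_finite_induct) (auto intro: ZS_add[OF assms(1)])

locale zsmod =
  fixes \<Sigma> :: "nat set" and smul :: "rat \<Rightarrow> 'm::ab_group_add \<Rightarrow> 'm"
  assumes primes: "\<forall>p\<in>\<Sigma>. prime p"
    and sadd: "q \<in> ZS \<Sigma> \<Longrightarrow> smul q (x + y) = smul q x + smul q y"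
    and addq: "q \<in> ZS \<Sigma> \<Longrightarrow> r \<in> ZS \<Sigma> \<Longrightarrow> smul (q + r) x = smul q x + smul r x"
    and multq: "q \<in> ZS \<Sigma> \<Longrightarrow> r \<in> ZS \<Sigma> \<Longrightarrow> smul (q * r) x = smul q (smul r x)"
    and one: "smul 1 x = x"
begin

abbreviation "R \<equiv> ZS \<Sigma>"

lemma R_add[intro]: "q \<in> R \<Longrightarrow> r \<in> R \<Longrightarrow> q + r \<in> R" using ZS_add primes by blast
lemma R_mult[intro]: "q \<in> R \<Longrightarrow> r \<in> R \<Longrightarrow> q * r \<in> R" using ZS_mult primes by blast
lemma R_diff[intro]: "q \<in> R \<Longrightarrow> r \<in> R \<Longrightarrow> q - r \<in> R" using ZS_diff primes by blast
lemma R_uminus[intro]: "q \<in> R \<Longrightarrow> - q \<in> R" using ZS_uminus by blast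
lemma R_sum[intro]: "(\<And>i. i \<in> I \<Longrightarrow> f i \<in> R) \<Longrightarrow> sum f I \<in> R" using ZS_sum primes by blast

lemma smul_0_left[simp]: "smul 0 x = 0"
  using addq[of 0 0 x] by simp

lemma smul_0_right[simp]: "q \<in> R \<Longrightarrow> smul q 0 = 0"
  using sadd[of q 0 0] by simp

lemma smul_minus_right: "q \<in> R \<Longrightarrow> smul q (- x) = - smul q x"
  using sadd[of q x "-x"] minus_unique[of "smul q x" "smul q (-x)"] by simp

lemma smul_diff_right: "q \<in> R \<Longrightarrow> smul q (x - y) = smul q x - smul q y"
  using sadd[of q x "-y"] smul_minus_right[of q y] by simp

lemma smul_minus_left: "q \<in> R \<Longrightarrow> smul (- q) x = - smul q x"
  using addq[of q "-q" x] minus_unique[of "smul q x" "smul (-q) x"] R_uminus[of q] by simp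

lemma smul_diff_left: "q \<in> R \<Longrightarrow> r \<in> R \<Longrightarrow> smul (q - r) x = smul q x - smul r x"
  using addq[of q "-r" x] smul_minus_left[of r x] by auto

lemma smul_sum_right: "q \<in> R \<Longrightarrow> smul q (sum f I) = (\<Sum>i\<in>I. smul q (f i))"
  by (induction I rule: infinite_finite_induct) (auto simp: sadd)

lemma smul_sum_left: "(\<And>i. i \<in> I \<Longrightarrow> f i \<in> R) \<Longrightarrow> smul (sum f I) x = (\<Sum>i\<in>I. smul (f i) x)"
proof (induction I rule: infinite_finite_induct)
  case (insert a F)
  then show ?case by (simp add: addq R_sum)
qed auto

definition zm :: "int \<Rightarrow> 'm \<Rightarrow> 'm" where "zm n x = smul (of_int n) x"

lemma zm_add_left: "zm (a + b) x = zm a x + zm b x" unfolding zm_def by (simp add: addq)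
lemma zm_add_right: "zm a (x + y) = zm a x + zm a y" unfolding zm_def by (simp add: sadd)
lemma zm_diff_right: "zm a (x - y) = zm a x - zm a y" unfolding zm_def by (simp add: smul_diff_right)
lemma zm_diff_left: "zm (a - b) x = zm a x - zm b x" unfolding zm_def by (simp add: smul_diff_left)
lemma zm_minus_left: "zm (- a) x = - zm a x" unfolding zm_def by (simp add: smul_minus_left)
lemma zm_minus_right: "zm a (- x) = - zm a x" unfolding zm_def by (simp add: smul_minus_right)
lemma zm_mult: "zm a (zm b x) = zm (a * b) x" unfolding zm_def by (simp add: multq)
lemma zm_1[simp]: "zm 1 x = x" unfolding zm_def by (simp add: one)
lemma zm_0[simp]: "zm 0 x = 0" unfolding zm_def by simp
lemma zm_0_right[simp]: "zm a 0 = 0" unfolding zm_def by simp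
lemma zm_smul: "q \<in> R \<Longrightarrow> zm a (smul q x) = smul (of_int a * q) x" unfolding zm_def by (simp add: multq)
lemma smul_zm: "q \<in> R \<Longrightarrow> smul q (zm a x) = smul (q * of_int a) x" unfolding zm_def by (simp add: multq)

lemmas zm_simps = zm_add_left zm_add_right zm_diff_right zm_diff_left zm_minus_left zm_minus_right zm_mult

definition sub :: "'m set \<Rightarrow> bool" where "sub C \<longleftrightarrow> is_submodule \<Sigma> smul C"
definition tf :: "'m set \<Rightarrow> bool" where
  "tf C \<longleftrightarrow> (\<forall>x n. n \<noteq> (0::int) \<longrightarrow> zm n x \<in> C \<longrightarrow> x \<in> C)"

lemma sub_0: "sub C \<Longrightarrow> 0 \<in> C" unfolding sub_def is_submodule_def is_subgroup_def by blast
lemma sub_add: "sub C \<Longrightarrow> x \<in> C \<Longrightarrow> y \<in> C \<Longrightarrow> x + y \<in> C" unfolding sub_def is_submodule_def is_subgroup_def by blast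
lemma sub_uminus: "sub C \<Longrightarrow> x \<in> C \<Longrightarrow> - x \<in> C" unfolding sub_def is_submodule_def is_subgroup_def by blast
lemma sub_diff: "sub C \<Longrightarrow> x \<in> C \<Longrightarrow> y \<in> C \<Longrightarrow> x - y \<in> C" using sub_add[of C x "-y"] sub_uminus by auto
lemma sub_smul: "sub C \<Longrightarrow> q \<in> R \<Longrightarrow> x \<in> C \<Longrightarrow> smul q x \<in> C" unfolding sub_def is_submodule_def by blast
lemma sub_zm: "sub C \<Longrightarrow> x \<in> C \<Longrightarrow> zm a x \<in> C" unfolding zm_def using sub_smul by simp
lemma sub_sum: "sub C \<Longrightarrow> (\<And>i. i \<in> I \<Longrightarrow> f i \<in> C) \<Longrightarrow> sum f I \<in> C"
  by (induction I rule: infinite_finite_induct) (auto intro: sub_add sub_0)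

lemma tfD: "tf C \<Longrightarrow> n \<noteq> 0 \<Longrightarrow> zm n x \<in> C \<Longrightarrow> x \<in> C" unfolding tf_def by blast

lemma R_num:
  assumes "q \<in> R" obtains a :: int and s :: int where "s > 0" "smul (of_int s) (smul q x) = zm a x" "q = of_int a / of_int s"
proof -
  obtain a s where as: "s \<in> gen_monoid \<Sigma>" "s > 0" "q = of_int a / of_nat s" using ZSE primes assms by metis
  have "smul (of_int (int s)) (smul q x) = smul (of_int (int s) * q) x" using multq assms by simp
  also have "of_int (int s) * q = of_int a" using as by simp
  finally show ?thesis using that[of "int s" a] as unfolding zm_def by simp
qed

lemma tf_R: assumes "sub C" "tf C" "q \<in> R" "q \<noteq> 0" "smul q x \<in> C" shows "x \<in> C"
proof -
  obtain a s where as: "s > 0" "smul (of_int s) (smul q x) = zm a x" "q = of_int a / of_int s"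
    using R_num[OF assms(3)] by metis
  have "a \<noteq> 0" using as assms(4) by auto
  moreover have "zm a x \<in> C" using as(2) sub_smul[OF assms(1) _ assms(5), of "of_int s"] by simp
  ultimately show ?thesis using tfD[OF assms(2)] by blast
qed

end

context zsmod begin

definition satur :: "'m set \<Rightarrow> 'm \<Rightarrow> 'm set" where
  "satur C g = {x. \<exists>n::int. n \<noteq> 0 \<and> (\<exists>a::int. zm n x - zm a g \<in> C)}"

lemma saturI: "n \<noteq> 0 \<Longrightarrow> zm n x - zm a g \<in> C \<Longrightarrow> x \<in> satur C g"
  unfolding satur_def by blast

lemma saturE: "x \<in> satur C g \<Longrightarrow> (\<And>n a. n \<noteq> 0 \<Longrightarrow> zm n x - zm a g \<in> C \<Longrightarrow> P) \<Longrightarrow> P"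
  unfolding satur_def by blast

lemma satur_C: "sub C \<Longrightarrow> x \<in> C \<Longrightarrow> x \<in> satur C g"
  by (rule saturI[of 1 _ 0]) auto

lemma satur_g: "sub C \<Longrightarrow> g \<in> satur C g"
  by (rule saturI[of 1 _ 1]) (auto intro: sub_0)

lemma satur_sub: assumes "sub C" shows "sub (satur C g)"
  unfolding sub_def is_submodule_def is_subgroup_def
proof (intro conjI ballI)
  show "0 \<in> satur C g" using satur_C[OF assms sub_0[OF assms]] .
next
  fix x y assume "x \<in> satur C g" "y \<in> satur C g"
  then obtain n a m b where nm: "n \<noteq> 0" "zm n x - zm a g \<in> C" "m \<noteq> 0" "zm m y - zm b g \<in> C"
    by (metis saturE)
  have "zm m (zm n x - zm a g) + zm n (zm m y - zm b g) \<in> C"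
    using nm assms by (intro sub_add sub_zm) auto
  moreover have "zm m (zm n x - zm a g) + zm n (zm m y - zm b g) = zm (n*m) (x+y) - zm (m*a + n*b) g"
    by (simp add: zm_simps algebra_simps)
  ultimately show "x + y \<in> satur C g" using nm by (intro saturI[of "n*m" _ "m*a+n*b"]) auto
next
  fix x assume "x \<in> satur C g"
  then obtain n a where nm: "n \<noteq> 0" "zm n x - zm a g \<in> C" by (metis saturE)
  have "- (zm n x - zm a g) = zm n (-x) - zm (-a) g" by (simp add: zm_simps)
  then show "- x \<in> satur C g" using nm sub_uminus[OF assms nm(2)] by (intro saturI[of n _ "-a"]) auto
next
  fix q x assume q: "q \<in> R" and "x \<in> satur C g"
  then obtain n a where nm: "n \<noteq> 0" "zm n x - zm a g \<in> C" by (metis saturE)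
  obtain b s where bs: "s > 0" "smul (of_int s) (smul q x) = zm b x" using R_num[OF q] by metis
  have "zm b (zm n x - zm a g) \<in> C" using sub_zm[OF assms nm(2)] .
  moreover have "zm b (zm n x - zm a g) = zm (n * s) (smul q x) - zm (b * a) g"
  proof -
    have "zm (n * s) (smul q x) = zm n (zm s (smul q x))" by (simp add: zm_simps)
    also have "\<dots> = zm n (zm b x)" using bs by (simp add: zm_def)
    finally show ?thesis by (simp add: zm_simps algebra_simps)
  qed
  moreover have "n * s \<noteq> 0" using nm bs by auto
  ultimately show "smul q x \<in> satur C g" by (metis saturI)
qed

lemma satur_tf: "tf (satur C g)"
  unfolding tf_def
proof (intro allI impI)
  fix x n assume n: "n \<noteq> (0::int)" and "zm n x \<in> satur C g"
  then obtain m a where "m \<noteq> 0" "zm m (zm n x) - zm a g \<in> C" by (metis saturE)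
  then show "x \<in> satur C g" using n by (intro saturI[of "m*n" _ a]) (auto simp: zm_simps)
qed

lemma satur_pair:
  assumes C: "sub C" "tf C" and x: "x \<in> satur C g" and y: "y \<in> satur C g"
  shows "\<exists>e\<in>satur C g. \<exists>w1\<in>R. \<exists>w2\<in>R. x - smul w1 e \<in> C \<and> y - smul w2 e \<in> C"
proof -
  obtain n1 a1 where 1: "n1 \<noteq> 0" "zm n1 x - zm a1 g \<in> C" using x by (metis saturE)
  obtain n2 a2 where 2: "n2 \<noteq> 0" "zm n2 y - zm a2 g \<in> C" using y by (metis saturE)
  define D where "D = n1 * n2"
  define b1 where "b1 = n2 * a1"
  define b2 where "b2 = n1 * a2"
  have D0: "D \<noteq> 0" using 1 2 by (simp add: D_def)
  have x1: "zm D x - zm b1 g \<in> C"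
  proof -
    have "zm n2 (zm n1 x - zm a1 g) \<in> C" using sub_zm[OF C(1) 1(2)] .
    then show ?thesis by (simp add: zm_simps D_def b1_def algebra_simps)
  qed
  have y1: "zm D y - zm b2 g \<in> C"
  proof -
    have "zm n1 (zm n2 y - zm a2 g) \<in> C" using sub_zm[OF C(1) 2(2)] .
    then show ?thesis by (simp add: zm_simps D_def b2_def algebra_simps)
  qed
  define d where "d = gcd b1 b2"
  obtain l1 l2 where l: "l1 * b1 + l2 * b2 = d" unfolding d_def using bezout_int by blast
  show ?thesis
  proof (cases "d = 0")
    case True
    then have "b1 = 0" "b2 = 0" unfolding d_def by auto
    then have "x \<in> C" "y \<in> C" using x1 y1 tfD[OF C(2) D0] by auto
    then show ?thesis using satur_C[OF C(1) sub_0[OF C(1)]] by (intro bexI[of _ 0]) auto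
  next
    case False
    define e where "e = zm l1 x + zm l2 y"
    have eS: "e \<in> satur C g" unfolding e_def using x y satur_sub[OF C(1)]
      by (auto intro: sub_add sub_zm)
    have e1: "zm D e - zm d g \<in> C"
    proof -
      have "zm l1 (zm D x - zm b1 g) + zm l2 (zm D y - zm b2 g) \<in> C"
        using x1 y1 C(1) by (intro sub_add sub_zm)
      moreover have "zm l1 (zm D x - zm b1 g) + zm l2 (zm D y - zm b2 g) = zm D e - zm d g"
        unfolding e_def l[symmetric] by (simp add: zm_simps algebra_simps)
      ultimately show ?thesis by simp
    qed
    have gen: "z - zm t e \<in> C" if "zm D z - zm b g \<in> C" "b = t * d" for z b t
    proof -
      have "(zm D z - zm b g) - zm t (zm D e - zm d g) \<in> C"
        by (rule sub_diff[OF C(1) that(1) sub_zm[OF C(1) e1]])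
      moreover have "(zm D z - zm b g) - zm t (zm D e - zm d g) = zm D (z - zm t e)"
        using that(2) by (simp add: zm_simps algebra_simps)
      ultimately show ?thesis using tfD[OF C(2) D0] by simp
    qed
    obtain t1 where t1: "b1 = t1 * d" unfolding d_def by (metis dvd_def gcd_dvd1 mult.commute)
    obtain t2 where t2: "b2 = t2 * d" unfolding d_def by (metis dvd_def gcd_dvd2 mult.commute)
    have "x - smul (of_int t1) e \<in> C" "y - smul (of_int t2) e \<in> C"
      using gen[OF x1 t1] gen[OF y1 t2] by (simp_all add: zm_def)
    then show ?thesis using eS by (intro bexI[of _ e]) auto
  qed
qed

lemma satur_family:
  fixes m :: nat and b :: "nat \<Rightarrow> 'm"
  assumes C: "sub C" "tf C"
  shows "\<forall>i<m. b i \<in> satur C g \<Longrightarrow> \<exists>e\<in>satur C g. \<forall>i<m. \<exists>w\<in>R. b i - smul w e \<in> C"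
proof (induction m)
  case 0
  then show ?case using satur_C[OF C(1) sub_0[OF C(1)]] by blast
next
  case (Suc m)
  then obtain e where e: "e \<in> satur C g" "\<forall>i<m. \<exists>w\<in>R. b i - smul w e \<in> C" by auto
  obtain e' w1 w2 where e': "e' \<in> satur C g" "w1 \<in> R" "w2 \<in> R"
      "e - smul w1 e' \<in> C" "b m - smul w2 e' \<in> C"
    using satur_pair[OF C e(1)] Suc.prems by blast
  have "\<exists>w\<in>R. b i - smul w e' \<in> C" if i: "i < Suc m" for i
  proof (cases "i = m")
    case True then show ?thesis using e' by blast
  next
    case False
    then obtain w where w: "w \<in> R" "b i - smul w e \<in> C" using e i False less_Suc_eq by blast
    have "(b i - smul w e) + smul w (e - smul w1 e') \<in> C"
      using w e' C(1) by (intro sub_add sub_smul)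
    moreover have "(b i - smul w e) + smul w (e - smul w1 e') = b i - smul (w * w1) e'"
      using w e' by (simp add: smul_diff_right multq)
    ultimately show ?thesis using w e' by (intro bexI[of _ "w * w1"]) auto
  qed
  then show ?case using e' by blast
qed

end

context zsmod begin

definition lc :: "(nat \<Rightarrow> rat) \<Rightarrow> (nat \<Rightarrow> 'm) \<Rightarrow> nat \<Rightarrow> 'm" where
  "lc v e k = (\<Sum>i<k. smul (v i) (e i))"

definition basis :: "'m set \<Rightarrow> nat \<Rightarrow> (nat \<Rightarrow> 'm) \<Rightarrow> bool" where
  "basis C k e \<longleftrightarrow> (\<forall>x. \<exists>v\<in>ZS_pow \<Sigma> k. x - lc v e k \<in> C) \<and>
     (\<forall>v\<in>ZS_pow \<Sigma> k. lc v e k \<in> C \<longrightarrow> v = (\<lambda>_. 0))"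

definition spanned :: "'m set \<Rightarrow> (nat \<Rightarrow> 'm) \<Rightarrow> nat \<Rightarrow> bool" where
  "spanned C g m \<longleftrightarrow> (\<forall>x. \<exists>c\<in>C. \<exists>a. (\<forall>i<m. a i \<in> R) \<and> x = c + (\<Sum>i<m. smul (a i) (g i)))"

lemma ZS_pow_iff: "v \<in> ZS_pow \<Sigma> k \<longleftrightarrow> (\<forall>i<k. v i \<in> R) \<and> (\<forall>i\<ge>k. v i = 0)"
  unfolding ZS_pow_def by simp

lemma lc_cong: "(\<And>i. i < k \<Longrightarrow> v i = w i) \<Longrightarrow> (\<And>i. i < k \<Longrightarrow> e i = f i) \<Longrightarrow> lc v e k = lc w f k"
  unfolding lc_def by (rule sum.cong) auto

lemma lc_Suc: "lc v e (Suc k) = lc v e k + smul (v k) (e k)"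
  unfolding lc_def by simp

lemma lc_zero[simp]: "lc (\<lambda>_. 0) e k = 0" unfolding lc_def by simp

lemma lc_in: "sub C \<Longrightarrow> v \<in> ZS_pow \<Sigma> k \<Longrightarrow> (\<And>i. i < k \<Longrightarrow> e i \<in> C) \<Longrightarrow> lc v e k \<in> C"
  unfolding lc_def ZS_pow_iff by (auto intro!: sub_sum sub_smul)

lemma lc_lin:
  assumes "\<And>i. i \<in> I \<Longrightarrow> a i \<in> R" "\<And>i. i \<in> I \<Longrightarrow> V i \<in> ZS_pow \<Sigma> k"
  shows "lc (\<lambda>j. \<Sum>i\<in>I. a i * V i j) e k = (\<Sum>i\<in>I. smul (a i) (lc (V i) e k))"
proof -
  have VR: "V i j \<in> R" if "i \<in> I" "j < k" for i j using assms(2)[OF that(1)] that(2) unfolding ZS_pow_iff by blast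
  have "lc (\<lambda>j. \<Sum>i\<in>I. a i * V i j) e k = (\<Sum>j<k. \<Sum>i\<in>I. smul (a i * V i j) (e j))"
    unfolding lc_def
  proof (rule sum.cong[OF refl])
    fix j assume "j \<in> {..<k}"
    then have "\<And>i. i \<in> I \<Longrightarrow> a i * V i j \<in> R" using assms(1) VR by blast
    then show "smul (\<Sum>i\<in>I. a i * V i j) (e j) = (\<Sum>i\<in>I. smul (a i * V i j) (e j))"
      by (rule smul_sum_left)
  qed
  also have "\<dots> = (\<Sum>i\<in>I. \<Sum>j<k. smul (a i * V i j) (e j))" by (rule sum.swap)
  also have "\<dots> = (\<Sum>i\<in>I. smul (a i) (lc (V i) e k))"
    unfolding lc_def
  proof (rule sum.cong[OF refl])
    fix i assume i: "i \<in> I"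
    have "smul (a i) (\<Sum>j<k. smul (V i j) (e j)) = (\<Sum>j<k. smul (a i) (smul (V i j) (e j)))"
      using assms(1)[OF i] by (rule smul_sum_right)
    also have "\<dots> = (\<Sum>j<k. smul (a i * V i j) (e j))"
      by (rule sum.cong[OF refl]) (use assms(1)[OF i] VR[OF i] in \<open>simp add: multq\<close>)
    finally show "(\<Sum>j<k. smul (a i * V i j) (e j)) = smul (a i) (\<Sum>j<k. smul (V i j) (e j))" by simp
  qed
  finally show ?thesis .
qed

lemma lc_diff: assumes "v \<in> ZS_pow \<Sigma> k" "w \<in> ZS_pow \<Sigma> k"
  shows "lc v e k - lc w e k = lc (\<lambda>i. v i - w i) e k"
proof -
  have "lc v e k - lc w e k = (\<Sum>i<k. smul (v i) (e i) - smul (w i) (e i))"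
    unfolding lc_def by (rule sum_subtractf[symmetric])
  also have "\<dots> = lc (\<lambda>i. v i - w i) e k"
    unfolding lc_def by (rule sum.cong[OF refl]) (use assms in \<open>simp add: smul_diff_left ZS_pow_iff\<close>)
  finally show ?thesis .
qed

lemma lc_add: assumes "v \<in> ZS_pow \<Sigma> k" "w \<in> ZS_pow \<Sigma> k"
  shows "lc v e k + lc w e k = lc (\<lambda>i. v i + w i) e k"
proof -
  have "lc v e k + lc w e k = (\<Sum>i<k. smul (v i) (e i) + smul (w i) (e i))"
    unfolding lc_def by (rule sum.distrib[symmetric])
  also have "\<dots> = lc (\<lambda>i. v i + w i) e k"
    unfolding lc_def by (rule sum.cong[OF refl]) (use assms in \<open>simp add: addq ZS_pow_iff\<close>)
  finally show ?thesis .
qed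

lemma lc_smul: assumes q: "q \<in> R" and v: "v \<in> ZS_pow \<Sigma> k"
  shows "smul q (lc v e k) = lc (\<lambda>i. q * v i) e k"
proof -
  have "smul q (lc v e k) = (\<Sum>i<k. smul q (smul (v i) (e i)))"
    unfolding lc_def by (rule smul_sum_right[OF q])
  also have "\<dots> = lc (\<lambda>i. q * v i) e k"
    unfolding lc_def by (rule sum.cong[OF refl]) (use q v in \<open>simp add: multq ZS_pow_iff\<close>)
  finally show ?thesis .
qed

lemma ZS_pow_diff: "v \<in> ZS_pow \<Sigma> k \<Longrightarrow> w \<in> ZS_pow \<Sigma> k \<Longrightarrow> (\<lambda>i. v i - w i) \<in> ZS_pow \<Sigma> k"
  unfolding ZS_pow_iff by auto
lemma ZS_pow_add: "v \<in> ZS_pow \<Sigma> k \<Longrightarrow> w \<in> ZS_pow \<Sigma> k \<Longrightarrow> (\<lambda>i. v i + w i) \<in> ZS_pow \<Sigma> k"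
  unfolding ZS_pow_iff by auto
lemma ZS_pow_smul: "q \<in> R \<Longrightarrow> v \<in> ZS_pow \<Sigma> k \<Longrightarrow> (\<lambda>i. q * v i) \<in> ZS_pow \<Sigma> k"
  unfolding ZS_pow_iff by auto

lemma basis_unique:
  assumes "sub C" "basis C k e" "v \<in> ZS_pow \<Sigma> k" "w \<in> ZS_pow \<Sigma> k" "x - lc v e k \<in> C" "x - lc w e k \<in> C"
  shows "v = w"
proof -
  have "(x - lc w e k) - (x - lc v e k) \<in> C" by (rule sub_diff[OF assms(1) assms(6) assms(5)])
  then have "lc (\<lambda>i. v i - w i) e k \<in> C" using lc_diff[OF assms(3,4)] by simp
  moreover have "\<forall>u\<in>ZS_pow \<Sigma> k. lc u e k \<in> C \<longrightarrow> u = (\<lambda>_. 0)" using assms(2) unfolding basis_def by blast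
  ultimately have "(\<lambda>i. v i - w i) = (\<lambda>_. 0)" using ZS_pow_diff[OF assms(3,4)] by blast
  then show ?thesis by (simp add: fun_eq_iff)
qed


theorem free_quotient:
  fixes m :: nat
  shows "sub C \<Longrightarrow> tf C \<Longrightarrow> spanned C g m \<Longrightarrow> \<exists>k e. basis C k e"
proof (induction m arbitrary: C)
  case 0
  then have "x \<in> C" for x unfolding spanned_def by auto
  moreover have "(\<lambda>_. 0) \<in> ZS_pow \<Sigma> 0" by (simp add: ZS_pow_iff)
  moreover have "v \<in> ZS_pow \<Sigma> 0 \<Longrightarrow> v = (\<lambda>_. 0)" for v by (simp add: ZS_pow_iff fun_eq_iff)
  ultimately have "basis C 0 e" for e unfolding basis_def by blast
  then show ?case by blast
next
  case (Suc m)
  define B where "B = satur C (g m)"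
  have subB: "sub B" and tfB: "tf B" unfolding B_def using satur_sub Suc.prems satur_tf by auto
  have CB: "C \<subseteq> B" using satur_C Suc.prems(1) unfolding B_def by blast
  have gB: "g m \<in> B" using satur_g Suc.prems(1) unfolding B_def by blast
  have "spanned B g m" unfolding spanned_def
  proof
    fix x
    obtain c a where ca: "c \<in> C" "\<forall>i<Suc m. a i \<in> R" "x = c + (\<Sum>i<Suc m. smul (a i) (g i))"
      using Suc.prems(3) unfolding spanned_def by blast
    have "c + smul (a m) (g m) \<in> B" using ca CB gB subB by (auto intro: sub_add sub_smul)
    moreover have "x = (c + smul (a m) (g m)) + (\<Sum>i<m. smul (a i) (g i))" using ca by (simp add: algebra_simps)
    moreover have "\<forall>i<m. a i \<in> R" using ca(2) by auto
    ultimately show "\<exists>c\<in>B. \<exists>a. (\<forall>i<m. a i \<in> R) \<and> x = c + (\<Sum>i<m. smul (a i) (g i))" by blast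
  qed
  then obtain k e where bas: "basis B k e" using Suc.IH subB tfB by blast
  define V where "V x = (SOME v. v \<in> ZS_pow \<Sigma> k \<and> x - lc v e k \<in> B)" for x
  have V: "V x \<in> ZS_pow \<Sigma> k \<and> x - lc (V x) e k \<in> B" for x
  proof -
    have "\<exists>v. v \<in> ZS_pow \<Sigma> k \<and> x - lc v e k \<in> B" using bas unfolding basis_def by blast
    then show ?thesis unfolding V_def by (rule someI_ex)
  qed
  define b where "b i = g i - lc (V (g i)) e k" for i
  have bB: "\<forall>i<Suc m. b i \<in> satur C (g m)" using V unfolding b_def B_def by auto
  obtain e0 where e0: "e0 \<in> B" "\<forall>i<Suc m. \<exists>w\<in>R. b i - smul w e0 \<in> C"
    using satur_family[OF Suc.prems(1,2) bB] unfolding B_def by blast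
  have rank1: "\<exists>w\<in>R. x - smul w e0 \<in> C" if xB: "x \<in> B" for x
  proof -
    obtain c a where ca: "c \<in> C" "\<forall>i<Suc m. a i \<in> R" "x = c + (\<Sum>i<Suc m. smul (a i) (g i))"
      using Suc.prems(3) unfolding spanned_def by blast
    define W where "W j = (\<Sum>i<Suc m. a i * V (g i) j)" for j
    have W: "W \<in> ZS_pow \<Sigma> k" unfolding W_def ZS_pow_iff using ca(2) V
      by (auto simp: ZS_pow_iff intro!: R_sum R_mult)
    have lcW: "lc W e k = (\<Sum>i<Suc m. smul (a i) (lc (V (g i)) e k))"
      unfolding W_def by (rule lc_lin) (use ca V in auto)
    have "x - (\<Sum>i<Suc m. smul (a i) (b i)) - c = lc W e k"
      unfolding lcW ca(3) b_def using ca(2)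
      by (simp add: smul_diff_right sum_subtractf)
    moreover have "x - (\<Sum>i<Suc m. smul (a i) (b i)) - c \<in> B"
      using xB ca CB bB subB unfolding B_def
      by (intro sub_diff sub_sum sub_smul) auto
    ultimately have "W = (\<lambda>_. 0)" using bas W unfolding basis_def by auto
    then have x: "x = c + (\<Sum>i<Suc m. smul (a i) (b i))"
      using \<open>x - (\<Sum>i<Suc m. smul (a i) (b i)) - c = lc W e k\<close> by (simp add: algebra_simps)
    obtain w where w: "\<And>i. i < Suc m \<Longrightarrow> w i \<in> R \<and> b i - smul (w i) e0 \<in> C"
      using e0(2) by metis
    have mem: "c + (\<Sum>i<Suc m. smul (a i) (b i - smul (w i) e0)) \<in> C"
      using ca w Suc.prems(1) by (intro sub_add sub_sum sub_smul) auto
    have eq: "c + (\<Sum>i<Suc m. smul (a i) (b i - smul (w i) e0)) = x - smul (\<Sum>i<Suc m. a i * w i) e0"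
    proof -
      have "smul (\<Sum>i<Suc m. a i * w i) e0 = (\<Sum>i<Suc m. smul (a i * w i) e0)"
        by (rule smul_sum_left) (use ca w in auto)
      also have "\<dots> = (\<Sum>i<Suc m. smul (a i) (smul (w i) e0))"
        by (rule sum.cong[OF refl]) (use ca w in \<open>simp add: multq\<close>)
      finally have sw: "smul (\<Sum>i<Suc m. a i * w i) e0 = (\<Sum>i<Suc m. smul (a i) (smul (w i) e0))" .
      have "(\<Sum>i<Suc m. smul (a i) (b i - smul (w i) e0)) = (\<Sum>i<Suc m. smul (a i) (b i) - smul (a i) (smul (w i) e0))"
        by (rule sum.cong[OF refl]) (use ca in \<open>simp add: smul_diff_right\<close>)
      also have "\<dots> = (\<Sum>i<Suc m. smul (a i) (b i)) - (\<Sum>i<Suc m. smul (a i) (smul (w i) e0))"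
        by (rule sum_subtractf)
      finally have "c + (\<Sum>i<Suc m. smul (a i) (b i - smul (w i) e0)) = (c + (\<Sum>i<Suc m. smul (a i) (b i))) - (\<Sum>i<Suc m. smul (a i) (smul (w i) e0))"
        by (simp only: add_diff_eq)
      then show ?thesis unfolding sw by (simp only: x[symmetric])
    qed
    have "x - smul (\<Sum>i<Suc m. a i * w i) e0 \<in> C" using mem unfolding eq .
    moreover have "(\<Sum>i<Suc m. a i * w i) \<in> R" using ca(2) w by (intro R_sum R_mult) auto
    ultimately show ?thesis by blast
  qed
  show ?case
  proof (cases "e0 \<in> C")
    case True
    have "B \<subseteq> C"
    proof
      fix x assume "x \<in> B"
      then obtain w where w: "w \<in> R" and xw: "x - smul w e0 \<in> C" using rank1 by blast
      have "(x - smul w e0) + smul w e0 \<in> C"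
        by (rule sub_add[OF Suc.prems(1) xw sub_smul[OF Suc.prems(1) w True]])
      then show "x \<in> C" by simp
    qed
    then have "B = C" using CB by blast
    then show ?thesis using bas by blast
  next
    case False
    define e' where "e' = e(k := e0)"
    have "basis C (Suc k) e'" unfolding basis_def
    proof (intro conjI allI ballI impI)
      fix x
      obtain v where v: "v \<in> ZS_pow \<Sigma> k" "x - lc v e k \<in> B" using bas unfolding basis_def by blast
      obtain w where w: "w \<in> R" "(x - lc v e k) - smul w e0 \<in> C" using rank1[OF v(2)] by blast
      have vw: "v(k := w) \<in> ZS_pow \<Sigma> (Suc k)" using v w by (auto simp: ZS_pow_iff)
      have l1: "lc (v(k := w)) e' k = lc v e k" by (rule lc_cong) (auto simp: e'_def)
      have "lc (v(k := w)) e' (Suc k) = lc v e k + smul w e0"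
        unfolding lc_Suc l1 by (simp add: e'_def)
      then have "x - lc (v(k := w)) e' (Suc k) \<in> C" using w(2) by (simp add: diff_diff_eq)
      then show "\<exists>v\<in>ZS_pow \<Sigma> (Suc k). x - lc v e' (Suc k) \<in> C"
        using vw by blast
    next
      fix v assume v: "v \<in> ZS_pow \<Sigma> (Suc k)" and vC: "lc v e' (Suc k) \<in> C"
      have l1: "lc v e' k = lc (v(k:=0)) e k" by (rule lc_cong) (auto simp: e'_def)
      have e'k: "lc v e' (Suc k) = lc (v(k:=0)) e k + smul (v k) e0"
        unfolding lc_Suc l1 by (simp add: e'_def)
      have vk: "v(k:=0) \<in> ZS_pow \<Sigma> k" "v k \<in> R" using v by (auto simp: ZS_pow_iff)
      have "lc v e' (Suc k) - smul (v k) e0 \<in> B"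
        by (rule sub_diff[OF subB _ sub_smul[OF subB vk(2) e0(1)]]) (use vC CB in blast)
      then have "lc (v(k:=0)) e k \<in> B" unfolding e'k by simp
      then have v0: "v(k:=0) = (\<lambda>_. 0)" using bas vk unfolding basis_def by blast
      then have "smul (v k) e0 \<in> C" using vC e'k by simp
      then have vk0: "v k = 0" using tf_R[OF Suc.prems(1,2) vk(2)] False by blast
      have "v i = 0" for i using fun_cong[OF v0, of i] vk0 by (cases "i = k") auto
      then show "v = (\<lambda>_. 0)" by (simp add: fun_eq_iff)
    qed
    then show ?thesis by blast
  qed
qed

end

locale topmod = zsmod \<Sigma> smul for \<Sigma> and smul :: "rat \<Rightarrow> 'm::{ab_group_add,t2_space} \<Rightarrow> 'm" +
  fixes U :: "'m set"
  assumes cont_add: "continuous_on UNIV (\<lambda>p::'m \<times> 'm. fst p + snd p)"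
    and U: "compact U" "open U" "is_subgroup U"
begin

lemma cont_transl: "continuous_on UNIV (\<lambda>x::'m. a + x)"
proof -
  have "continuous_on UNIV (\<lambda>x::'m. (a, x))" by (intro continuous_intros)
  then show ?thesis
    using continuous_on_compose2[OF cont_add, of UNIV "\<lambda>x. (a, x)"] by simp
qed

lemma open_transl_vimage: "open W \<Longrightarrow> open ((\<lambda>x::'m. a + x) -` W)"
  using continuous_on_open_vimage[of UNIV "\<lambda>x. a + x"] cont_transl by auto

lemma open_transl_vimage': "open W \<Longrightarrow> open ((\<lambda>x::'m. x - a) -` W)"
  using open_transl_vimage[of W "-a"] by (simp add: algebra_simps)

lemma open_transl: "open W \<Longrightarrow> open ((\<lambda>x::'m. a + x) ` W)"
proof -
  assume "open W"
  moreover have "(\<lambda>x::'m. a + x) ` W = (\<lambda>x. - a + x) -` W"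
    by (auto simp: image_iff algebra_simps intro!: bexI[of _ "- a + _"])
  ultimately show ?thesis using open_transl_vimage' by simp
qed

lemma compact_transl: "compact K \<Longrightarrow> compact ((\<lambda>x::'m. a + x) ` K)"
  using compact_continuous_image continuous_on_subset[OF cont_transl] by blast

lemma cl_compact: "A \<subseteq> K \<Longrightarrow> compact K \<Longrightarrow> compact (closure (A::'m set))"
proof -
  assume "A \<subseteq> K" "compact K"
  then have "closure A \<subseteq> K" by (intro closure_minimal compact_imp_closed)
  then have "closure A = K \<inter> closure A" by blast
  then show ?thesis using compact_Int_closed[OF \<open>compact K\<close>, of "closure A"] by simp
qed

definition Zr :: "'m \<Rightarrow> 'm set" where "Zr x = range (\<lambda>n. zm n x)"

definition CP :: "'m set" where "CP = {x. compact (closure (Zr x))}"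

lemma CP_eq: "Cpart smul = CP"
  unfolding Cpart_def CP_def Zr_def zm_def by simp

lemma subgroup_zm: assumes "is_subgroup G" "x \<in> G" shows "zm n x \<in> G"
proof -
  have pos: "zm (int k) x \<in> G" for k
  proof (induction k)
    case 0 then show ?case using assms(1) unfolding is_subgroup_def by simp
  next
    case (Suc k)
    have "zm (int (Suc k)) x = zm (int k) x + x" by (simp add: zm_add_left)
    then show ?case using Suc assms unfolding is_subgroup_def by simp
  qed
  show ?thesis
  proof (cases "n \<ge> 0")
    case True then show ?thesis using pos[of "nat n"] by simp
  next
    case False
    then have "zm n x = - zm (int (nat (- n))) x" using zm_minus_left[of "- n" x] by simp
    then show ?thesis using pos[of "nat (-n)"] assms(1) unfolding is_subgroup_def by simp
  qed
qed

lemma U_CP: "U \<subseteq> CP"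
proof
  fix x assume "x \<in> U"
  then have "Zr x \<subseteq> U" unfolding Zr_def using subgroup_zm[OF U(3)] by auto
  then show "x \<in> CP" unfolding CP_def using cl_compact U(1) by blast
qed

lemma CP_0: "0 \<in> CP"
  using U_CP U(3) unfolding is_subgroup_def by auto

lemma CP_add: assumes "x \<in> CP" "y \<in> CP" shows "x + y \<in> CP"
proof -
  let ?K = "(\<lambda>p. fst p + snd p) ` (closure (Zr x) \<times> closure (Zr y))"
  have "compact ?K"
    using assms unfolding CP_def
    by (intro compact_continuous_image continuous_on_subset[OF cont_add] compact_Times) auto
  moreover have "Zr (x + y) \<subseteq> ?K"
  proof
    fix z assume "z \<in> Zr (x + y)"
    then obtain n where "z = zm n (x + y)" unfolding Zr_def by auto
    then have "z = fst (zm n x, zm n y) + snd (zm n x, zm n y)" by (simp add: zm_add_right)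
    moreover have "(zm n x, zm n y) \<in> closure (Zr x) \<times> closure (Zr y)"
      unfolding Zr_def by (auto intro: closure_subset[THEN subsetD])
    ultimately show "z \<in> ?K" by blast
  qed
  ultimately show ?thesis unfolding CP_def using cl_compact by blast
qed

lemma Zr_zm: "Zr (zm a x) \<subseteq> Zr x"
  unfolding Zr_def by (auto simp: zm_mult)

lemma CP_zm: "x \<in> CP \<Longrightarrow> zm a x \<in> CP"
proof -
  assume "x \<in> CP"
  have "Zr (zm a x) \<subseteq> closure (Zr x)" using Zr_zm closure_subset by blast
  then show "zm a x \<in> CP" using cl_compact \<open>x \<in> CP\<close> unfolding CP_def by blast
qed

lemma CP_uminus: "x \<in> CP \<Longrightarrow> - x \<in> CP"
  using CP_zm[of x "-1"] by (simp add: zm_minus_left)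

lemma CP_tf_pos: assumes N: "N > 0" and y: "zm N y \<in> CP" shows "y \<in> CP"
proof -
  let ?K = "\<Union>j\<in>{0..<N}. (\<lambda>z. zm j y + z) ` closure (Zr (zm N y))"
  have "compact ?K" using y unfolding CP_def by (intro compact_UN compact_transl) auto
  moreover have "Zr y \<subseteq> ?K"
  proof
    fix z assume "z \<in> Zr y"
    then obtain t where t: "z = zm t y" unfolding Zr_def by auto
    have "t = t mod N + (t div N) * N" by simp
    then have "zm t y = zm (t mod N) y + zm (t div N) (zm N y)"
      by (metis zm_add_left zm_mult)
    moreover have "zm (t div N) (zm N y) \<in> closure (Zr (zm N y))"
      unfolding Zr_def by (auto intro: closure_subset[THEN subsetD])
    moreover have "t mod N \<in> {0..<N}" using N by simp
    ultimately show "z \<in> ?K" using t by blast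
  qed
  ultimately show ?thesis unfolding CP_def using cl_compact by blast
qed

lemma CP_tf: "tf CP"
  unfolding tf_def
proof (intro allI impI)
  fix x and n :: int assume n: "n \<noteq> 0" and x: "zm n x \<in> CP"
  show "x \<in> CP"
  proof (cases "n > 0")
    case True then show ?thesis using CP_tf_pos x by blast
  next
    case False
    then have "- n > 0" using n by simp
    moreover have "zm (- n) x \<in> CP" using CP_uminus[OF x] by (simp add: zm_minus_left)
    ultimately show ?thesis using CP_tf_pos by blast
  qed
qed

lemma CP_smul: assumes q: "q \<in> R" and x: "x \<in> CP" shows "smul q x \<in> CP"
proof -
  obtain a s where as: "s > 0" "smul (of_int s) (smul q x) = zm a x" using R_num[OF q] by metis
  have "zm s (smul q x) \<in> CP" using as CP_zm[OF x] by (simp add: zm_def)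
  then show ?thesis using CP_tf_pos as(1) by blast
qed

lemma CP_sub: "sub CP"
  unfolding sub_def is_submodule_def is_subgroup_def
  using CP_0 CP_add CP_uminus CP_smul by blast

lemma CP_open: "open CP"
proof -
  have "CP = (\<Union>c\<in>CP. (\<lambda>x. c + x) ` U)"
  proof
    show "CP \<subseteq> (\<Union>c\<in>CP. (\<lambda>x. c + x) ` U)"
    proof
      fix c assume "c \<in> CP"
      moreover have "c = c + 0" by simp
      moreover have "0 \<in> U" using U(3) unfolding is_subgroup_def by blast
      ultimately show "c \<in> (\<Union>c\<in>CP. (\<lambda>x. c + x) ` U)" by blast
    qed
    show "(\<Union>c\<in>CP. (\<lambda>x. c + x) ` U) \<subseteq> CP" using U_CP CP_add by blast
  qed
  moreover have "open (\<Union>c\<in>CP. (\<lambda>x. c + x) ` U)" using open_transl U(2) by blast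
  ultimately show ?thesis by simp
qed

end

context topmod begin

lemma CP_spanned:
  assumes K: "compact K" and gen: "gen_submodule \<Sigma> smul K = UNIV"
  shows "\<exists>g m. spanned CP g m"
proof -
  have U0: "0 \<in> U" using U(3) unfolding is_subgroup_def by blast
  have "K \<subseteq> (\<Union>x\<in>K. (\<lambda>u. x + u) ` U)" using U0 by force
  then obtain F where F: "F \<subseteq> K" "finite F" "K \<subseteq> (\<Union>x\<in>F. (\<lambda>u. x + u) ` U)"
    using compactE_image[OF K, of K "\<lambda>x. (\<lambda>u. x + u) ` U"] open_transl[OF U(2)] by metis
  obtain m :: nat and g :: "nat \<Rightarrow> 'm" where g: "F = g ` {i. i < m}" using finite_imp_nat_seg_image_inj_on[OF F(2)] by blast
  define S where "S = {x. \<exists>c\<in>CP. \<exists>a. (\<forall>i<m. a i \<in> R) \<and> x = c + (\<Sum>i<m. smul (a i) (g i))}"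
  have SI: "x \<in> S" if "c \<in> CP" "\<forall>i<m. a i \<in> R" "x = c + (\<Sum>i<m. smul (a i) (g i))" for x c a
    unfolding S_def using that by blast
  have "is_submodule \<Sigma> smul S"
    unfolding is_submodule_def is_subgroup_def
  proof (intro conjI ballI)
    show "0 \<in> S" unfolding S_def using CP_0
      by (intro CollectI bexI[of _ 0] exI[of _ "\<lambda>_. 0"]) auto
  next
    fix x y assume "x \<in> S" "y \<in> S"
    then obtain c a d b where ca: "c \<in> CP" "\<forall>i<m. a i \<in> R" "x = c + (\<Sum>i<m. smul (a i) (g i))"
      and db: "d \<in> CP" "\<forall>i<m. b i \<in> R" "y = d + (\<Sum>i<m. smul (b i) (g i))"
      unfolding S_def by blast
    have "(\<Sum>i<m. smul (a i + b i) (g i)) = (\<Sum>i<m. smul (a i) (g i)) + (\<Sum>i<m. smul (b i) (g i))"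
      unfolding sum.distrib[symmetric] by (rule sum.cong[OF refl]) (use ca db in \<open>simp add: addq\<close>)
    then have "x + y = (c + d) + (\<Sum>i<m. smul (a i + b i) (g i))" using ca db by (simp add: algebra_simps)
    moreover have "c + d \<in> CP" using ca db CP_add by blast
    moreover have "\<forall>i<m. a i + b i \<in> R" using ca db by blast
    ultimately show "x + y \<in> S" by (rule SI[rotated 2])
  next
    fix x assume "x \<in> S"
    then obtain c a where ca: "c \<in> CP" "\<forall>i<m. a i \<in> R" "x = c + (\<Sum>i<m. smul (a i) (g i))"
      unfolding S_def by blast
    have "(\<Sum>i<m. smul (- a i) (g i)) = - (\<Sum>i<m. smul (a i) (g i))"
      unfolding sum_negf[symmetric] by (rule sum.cong[OF refl]) (use ca in \<open>simp add: smul_minus_left\<close>)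
    then have "- x = (- c) + (\<Sum>i<m. smul (- a i) (g i))" using ca by (simp add: algebra_simps)
    moreover have "- c \<in> CP" using ca CP_uminus by blast
    moreover have "\<forall>i<m. - a i \<in> R" using ca by blast
    ultimately show "- x \<in> S" by (rule SI[rotated 2])
  next
    fix q x assume q: "q \<in> R" and "x \<in> S"
    then obtain c a where ca: "c \<in> CP" "\<forall>i<m. a i \<in> R" "x = c + (\<Sum>i<m. smul (a i) (g i))"
      unfolding S_def by blast
    have "smul q (\<Sum>i<m. smul (a i) (g i)) = (\<Sum>i<m. smul (q * a i) (g i))"
      unfolding smul_sum_right[OF q] by (rule sum.cong[OF refl]) (use ca q in \<open>simp add: multq\<close>)
    then have "smul q x = smul q c + (\<Sum>i<m. smul (q * a i) (g i))" using ca q by (simp add: sadd)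
    moreover have "smul q c \<in> CP" using ca q CP_smul by blast
    moreover have "\<forall>i<m. q * a i \<in> R" using ca q by blast
    ultimately show "smul q x \<in> S" by (rule SI[rotated 2])
  qed
  moreover have "K \<subseteq> S"
  proof
    fix x assume "x \<in> K"
    then obtain y where y: "y \<in> F" "x \<in> (\<lambda>u. y + u) ` U" using F(3) by blast
    then obtain j where j: "j < m" "y = g j" using g by blast
    obtain u where u: "u \<in> U" "x = y + u" using y(2) by blast
    have ju: "j < m" "u \<in> U" "x = g j + u" using j u by auto
    define a where "a i = (if i = j then 1 else (0::rat))" for i
    have "(\<Sum>i<m. smul (a i) (g i)) = (\<Sum>i<m. if i = j then g i else 0)"
      by (rule sum.cong[OF refl]) (simp add: a_def one)
    also have "\<dots> = g j" using ju(1) by (simp add: sum.delta)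
    finally have "x = u + (\<Sum>i<m. smul (a i) (g i))" using ju by (simp add: algebra_simps)
    moreover have "u \<in> CP" using ju U_CP by blast
    moreover have "\<forall>i<m. a i \<in> R" unfolding a_def by simp
    ultimately show "x \<in> S" by (rule SI[rotated 2])
  qed
  ultimately have "gen_submodule \<Sigma> smul K \<subseteq> S" unfolding gen_submodule_def by blast
  then have "spanned CP g m" using gen unfolding spanned_def S_def by blast
  then show ?thesis by blast
qed

end

context topmod begin

theorem decomp:
  assumes sp: "spanned CP g m"
  shows "\<exists>(k::nat) (f :: 'm \<Rightarrow> (nat \<Rightarrow> rat) \<times> 'm).
           homeomorphic_map euclidean
             (prod_topology (discrete_topology (ZS_pow \<Sigma> k)) (top_of_set CP)) f \<and>
           (\<forall>x y. f (x + y) = ((\<lambda>i. fst (f x) i + fst (f y) i), snd (f x) + snd (f y))) \<and>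
           (\<forall>q\<in>ZS \<Sigma>. \<forall>x. f (smul q x) = ((\<lambda>i. q * fst (f x) i), smul q (snd (f x))))"
proof -
  obtain k e where bas: "basis CP k e" using free_quotient[OF CP_sub CP_tf sp] by blast
  define V where "V x = (SOME v. v \<in> ZS_pow \<Sigma> k \<and> x - lc v e k \<in> CP)" for x
  have V: "V x \<in> ZS_pow \<Sigma> k \<and> x - lc (V x) e k \<in> CP" for x
  proof -
    have "\<exists>v. v \<in> ZS_pow \<Sigma> k \<and> x - lc v e k \<in> CP" using bas unfolding basis_def by blast
    then show ?thesis unfolding V_def by (rule someI_ex)
  qed
  have Vu: "V x = v" if "v \<in> ZS_pow \<Sigma> k" "x - lc v e k \<in> CP" for x v
    using basis_unique[OF CP_sub bas _ that(1) _ that(2)] V by blast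
  define f where "f x = (V x, x - lc (V x) e k)" for x
  define h where "h p = lc (fst p) e k + snd p" for p :: "(nat \<Rightarrow> rat) \<times> 'm"
  have fib: "{x. V x = v} = (\<lambda>c. lc v e k + c) ` CP" if v: "v \<in> ZS_pow \<Sigma> k" for v
  proof
    show "{x. V x = v} \<subseteq> (\<lambda>c. lc v e k + c) ` CP"
    proof
      fix x assume "x \<in> {x. V x = v}"
      then have "V x = v" by simp
      then show "x \<in> (\<lambda>c. lc v e k + c) ` CP" using V[of x] by (metis add.commute diff_add_cancel imageI)
    qed
    show "(\<lambda>c. lc v e k + c) ` CP \<subseteq> {x. V x = v}"
    proof
      fix x assume "x \<in> (\<lambda>c. lc v e k + c) ` CP"
      then obtain c where c: "c \<in> CP" "x = lc v e k + c" by blast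
      then have "x - lc v e k \<in> CP" by simp
      then show "x \<in> {x. V x = v}" using Vu[OF v] by blast
    qed
  qed
  have fib_open: "open {x. V x = v}" if "v \<in> ZS_pow \<Sigma> k" for v
    unfolding fib[OF that] by (rule open_transl[OF CP_open])
  have add: "f (x + y) = ((\<lambda>i. fst (f x) i + fst (f y) i), snd (f x) + snd (f y))" for x y
  proof -
    have eq: "(x + y) - lc (\<lambda>i. V x i + V y i) e k = (x - lc (V x) e k) + (y - lc (V y) e k)"
      unfolding lc_add[OF V[THEN conjunct1] V[THEN conjunct1], symmetric] by (simp add: algebra_simps)
    have mem: "(x - lc (V x) e k) + (y - lc (V y) e k) \<in> CP" using V[of x] V[of y] CP_add by blast
    have VV: "V (x + y) = (\<lambda>i. V x i + V y i)"
      by (rule Vu[OF ZS_pow_add[OF V[THEN conjunct1] V[THEN conjunct1]]]) (unfold eq, rule mem)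
    show ?thesis unfolding f_def fst_conv snd_conv VV eq ..
  qed
  have sm: "f (smul q x) = ((\<lambda>i. q * fst (f x) i), smul q (snd (f x)))" if q: "q \<in> R" for q x
  proof -
    have eq: "smul q x - lc (\<lambda>i. q * V x i) e k = smul q (x - lc (V x) e k)"
      unfolding lc_smul[OF q V[THEN conjunct1], symmetric] smul_diff_right[OF q] ..
    have mem: "smul q (x - lc (V x) e k) \<in> CP" using V[of x] CP_smul q by blast
    have VV: "V (smul q x) = (\<lambda>i. q * V x i)"
      by (rule Vu[OF ZS_pow_smul[OF q V[THEN conjunct1]]]) (unfold eq, rule mem)
    show ?thesis unfolding f_def fst_conv snd_conv VV eq ..
  qed
  have hf: "h (f x) = x" for x unfolding h_def f_def by simp
  have fh: "f (h p) = p" if pin: "p \<in> ZS_pow \<Sigma> k \<times> CP" for p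
  proof -
    obtain v c where p: "p = (v, c)" "v \<in> ZS_pow \<Sigma> k" "c \<in> CP" using pin by (cases p) auto
    have VV: "V (lc v e k + c) = v" by (rule Vu[OF p(2)]) (simp add: p(3))
    show ?thesis unfolding f_def h_def p(1) fst_conv snd_conv VV by simp
  qed
  have cf1: "continuous_map euclidean (discrete_topology (ZS_pow \<Sigma> k)) (fst \<circ> f)"
    unfolding continuous_map
  proof (intro conjI allI impI)
    have "fst (f x) \<in> ZS_pow \<Sigma> k" for x using V[of x] unfolding f_def by simp
    then show "(fst \<circ> f) ` topspace euclidean \<subseteq> topspace (discrete_topology (ZS_pow \<Sigma> k))"
      by auto
  next
    fix W assume "openin (discrete_topology (ZS_pow \<Sigma> k)) W"
    then have W: "W \<subseteq> ZS_pow \<Sigma> k" by simp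
    have "{x \<in> topspace euclidean. (fst \<circ> f) x \<in> W} = (\<Union>v\<in>W. {x. V x = v})"
      by (auto simp: f_def)
    moreover have "open (\<Union>v\<in>W. {x. V x = v})" by (rule open_UN) (use fib_open W in blast)
    ultimately show "openin euclidean {x \<in> topspace euclidean. (fst \<circ> f) x \<in> W}"
      using open_openin by metis
  qed
  have cf2: "continuous_map euclidean (top_of_set CP) (snd \<circ> f)"
    unfolding continuous_map_in_subtopology
  proof
    have "snd (f x) \<in> CP" for x using V[of x] unfolding f_def by simp
    then show "snd \<circ> f \<in> topspace euclidean \<rightarrow> CP" by simp
    have "continuous_on UNIV (snd \<circ> f)"
      unfolding continuous_on_open_vimage[OF open_UNIV]
    proof (intro allI impI)
      fix B :: "'m set" assume B: "open B"
      have "(snd \<circ> f) -` B \<inter> UNIV = (\<Union>v\<in>ZS_pow \<Sigma> k. {x. V x = v} \<inter> (\<lambda>x. x - lc v e k) -` B)"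
      proof (rule set_eqI)
        fix x
        show "x \<in> (snd \<circ> f) -` B \<inter> UNIV \<longleftrightarrow> x \<in> (\<Union>v\<in>ZS_pow \<Sigma> k. {x. V x = v} \<inter> (\<lambda>x. x - lc v e k) -` B)"
          using V[of x] unfolding f_def by auto
      qed
      moreover have "open (\<Union>v\<in>ZS_pow \<Sigma> k. {x. V x = v} \<inter> (\<lambda>x. x - lc v e k) -` B)"
        by (intro open_UN ballI open_Int fib_open open_transl_vimage'[OF B])
      ultimately show "open ((snd \<circ> f) -` B \<inter> UNIV)" by simp
    qed
    then show "continuous_map euclidean euclidean (snd \<circ> f)" by simp
  qed
  have ch: "continuous_map (prod_topology (discrete_topology (ZS_pow \<Sigma> k)) (top_of_set CP)) euclidean h"
    unfolding continuous_map
  proof (intro conjI allI impI)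
    show "h ` topspace (prod_topology (discrete_topology (ZS_pow \<Sigma> k)) (top_of_set CP)) \<subseteq> topspace euclidean"
      by simp
  next
    fix W :: "'m set" assume "openin euclidean W"
    then have W: "open W" using open_openin by blast
    let ?X = "prod_topology (discrete_topology (ZS_pow \<Sigma> k)) (top_of_set CP)"
    have "{p \<in> topspace ?X. h p \<in> W} = (\<Union>v\<in>ZS_pow \<Sigma> k. {v} \<times> (CP \<inter> (\<lambda>c. lc v e k + c) -` W))"
      by (auto simp: h_def)
    moreover have op: "openin ?X ({v} \<times> (CP \<inter> (\<lambda>c. lc v e k + c) -` W))" if "v \<in> ZS_pow \<Sigma> k" for v
      unfolding openin_prod_Times_iff using that open_transl_vimage[OF W]
      by (auto intro: openin_open_Int)
    moreover have "openin ?X (\<Union>v\<in>ZS_pow \<Sigma> k. {v} \<times> (CP \<inter> (\<lambda>c. lc v e k + c) -` W))"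
      by (rule openin_Union) (use op in blast)
    ultimately show "openin ?X {p \<in> topspace ?X. h p \<in> W}" by simp
  qed
  have cf: "continuous_map euclidean (prod_topology (discrete_topology (ZS_pow \<Sigma> k)) (top_of_set CP)) f"
    unfolding continuous_map_pairwise using cf1 cf2 by blast
  have "homeomorphic_maps euclidean (prod_topology (discrete_topology (ZS_pow \<Sigma> k)) (top_of_set CP)) f h"
    unfolding homeomorphic_maps_def
  proof (intro conjI cf ch ballI)
    fix x show "h (f x) = x" by (rule hf)
  next
    fix y assume "y \<in> topspace (prod_topology (discrete_topology (ZS_pow \<Sigma> k)) (top_of_set CP))"
    then show "f (h y) = y" using fh by simp
  qed
  then have "homeomorphic_map euclidean (prod_topology (discrete_topology (ZS_pow \<Sigma> k)) (top_of_set CP)) f"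
    using homeomorphic_map_maps by blast
  then show ?thesis using add sm by blast
qed

end

theorem mainTheorem12:
  fixes \<Sigma> :: "nat set"
    and smul :: "rat \<Rightarrow> 'm::{ab_group_add,t2_space} \<Rightarrow> 'm"
  assumes "\<forall>p\<in>\<Sigma>. prime p"
    and "top_ZS_module \<Sigma> smul"
    and "locally_compact_space (euclidean :: 'm topology)"
    and "\<exists>U::'m set. compact U \<and> open U \<and> is_subgroup U"
    and "compactly_generated \<Sigma> smul"
  shows "\<exists>(k::nat) (f :: 'm \<Rightarrow> (nat \<Rightarrow> rat) \<times> 'm).
           homeomorphic_map euclidean
             (prod_topology (discrete_topology (ZS_pow \<Sigma> k)) (top_of_set (Cpart smul))) f \<and>
           (\<forall>x y. f (x + y) = ((\<lambda>i. fst (f x) i + fst (f y) i), snd (f x) + snd (f y))) \<and>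
           (\<forall>q\<in>ZS \<Sigma>. \<forall>x. f (smul q x) = ((\<lambda>i. q * fst (f x) i), smul q (snd (f x))))"
proof -
  obtain U :: "'m set" where U: "compact U" "open U" "is_subgroup U" using assms(4) by blast
  have M: "(\<forall>q\<in>ZS \<Sigma>. \<forall>x y. smul q (x + y) = smul q x + smul q y)"
     "(\<forall>q\<in>ZS \<Sigma>. \<forall>r\<in>ZS \<Sigma>. \<forall>x. smul (q + r) x = smul q x + smul r x)"
     "(\<forall>q\<in>ZS \<Sigma>. \<forall>r\<in>ZS \<Sigma>. \<forall>x. smul (q * r) x = smul q (smul r x))"
     "(\<forall>x. smul 1 x = x)"
     "continuous_on UNIV (\<lambda>p::'m \<times> 'm. fst p + snd p)"
    using assms(2) unfolding top_ZS_module_def by blast+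
  interpret topmod \<Sigma> smul U
    by unfold_locales (use assms(1) M U in auto)
  obtain K where K: "compact K" "gen_submodule \<Sigma> smul K = UNIV"
    using assms(5) unfolding compactly_generated_def by blast
  obtain g m where "spanned CP g m" using CP_spanned[OF K] by blast
  then show ?thesis using decomp unfolding CP_eq by blast
qed

end
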